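(* Let $\alpha\in[0,1)$ and let $G=(V,E)$ be a countable graph whose degrees are uniformly bounded by $\Delta$. Then there exists a non-vanishing equilibrium $\mu$ on $G$ with $\mu(e)\ge 2/\Delta^{1/(1-\alpha)}$ for all $e\in E$.
   Context: Edges are two-element subsets of $V$; $E_v=\{e\in E:v\in e\}$. A vector $\mu\in[0,\infty)^E$ is an equilibrium on $G$ if $\mu(e)=\sum_{v\in e}\mu(e)^\alpha/\sum_{e'\in E_v}\mu(e')^\alpha$ for every $e\in E$ with $\mu(e)>0$; it is non-vanishing if $\mu(e)>0$ for all $e\in E$. *)

theory Defs
  imports "HOL-Analysis.Analysis"
begin

definition is_graph :: "'a set \<Rightarrow> 'a set set \<Rightarrow> bool" where
  "is_graph V E \<longleftrightarrow> (\<forall>e\<in>E. e \<subseteq> V \<and> card e = 2)"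

definition inc_edges :: "'a set set \<Rightarrow> 'a \<Rightarrow> 'a set set" where
  "inc_edges E v = {e \<in> E. v \<in> e}"

definition degree_bounded :: "'a set \<Rightarrow> 'a set set \<Rightarrow> nat \<Rightarrow> bool" where
  "degree_bounded V E \<Delta> \<longleftrightarrow>
     (\<forall>v\<in>V. finite (inc_edges E v) \<and> card (inc_edges E v) \<le> \<Delta>)"

definition equilibrium :: "real \<Rightarrow> 'a set set \<Rightarrow> ('a set \<Rightarrow> real) \<Rightarrow> bool" where
  "equilibrium \<alpha> E \<mu> \<longleftrightarrow>
     (\<forall>e\<in>E. \<mu> e \<ge> 0) \<and>
     (\<forall>e\<in>E. \<mu> e > 0 \<longrightarrow>
        \<mu> e = (\<Sum>v\<in>e. \<mu> e powr \<alpha> / (\<Sum>e'\<in>inc_edges E v. \<mu> e' powr \<alpha>)))"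

definition non_vanishing :: "'a set set \<Rightarrow> ('a set \<Rightarrow> real) \<Rightarrow> bool" where
  "non_vanishing E \<mu> \<longleftrightarrow> (\<forall>e\<in>E. \<mu> e > 0)"

end

theory Submission
  imports Defs
begin

lemma box_compact:
  fixes I :: "'i \<Rightarrow> real set"
  assumes "\<And>i. compact (I i)"
  shows "compact {f. \<forall>i. f i \<in> I i}"
proof -
  have eq: "{f. \<forall>i. f i \<in> I i} = PiE UNIV I" by (auto simp: PiE_def extensional_def Pi_def)
  have "compactin (product_topology (\<lambda>i. euclidean) UNIV) (PiE UNIV I)"
    using assms by (simp add: compactin_PiE)
  then show ?thesis unfolding eq euclidean_product_topology by simp
qed

lemma box_closed:
  fixes I :: "'i \<Rightarrow> real set"
  assumes "\<And>i. closed (I i)"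
  shows "closed {f. \<forall>i. f i \<in> I i}"
proof -
  have eq: "{f::'i\<Rightarrow>real. \<forall>i. f i \<in> I i} = (\<Inter>i. (\<lambda>f. f i) -` I i)" by auto
  have "closed ((\<lambda>f::'i\<Rightarrow>real. f i) -` I i)" for i
    by (intro closed_vimage assms continuous_on_product_coordinates)
  then show ?thesis unfolding eq by blast
qed

lemma cont_coord [continuous_intros]: "continuous_on S (\<lambda>x::'i\<Rightarrow>'b::topological_space. x i)"
  by (rule continuous_on_subset[OF continuous_on_product_coordinates]) simp

lemma deriv_upd:
  fixes \<mu> :: "'i \<Rightarrow> real"
  assumes "t > 0"
  shows "((\<lambda>s. (\<mu>(e:=s)) e' powr \<alpha>) has_real_derivative (if e' = e then \<alpha> * t powr (\<alpha>-1) else 0)) (at t)"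
proof (cases "e' = e")
  case True
  then show ?thesis using has_real_derivative_powr[OF assms, of \<alpha>] by simp
next
  case False
  then show ?thesis by simp
qed

lemma deriv_upd_lin:
  fixes \<mu> :: "'i \<Rightarrow> real"
  shows "((\<lambda>s. (\<mu>(e:=s)) e') has_real_derivative (if e' = e then 1 else 0)) (at t)"
proof (cases "e' = e")
  case True
  then show ?thesis by (simp add: DERIV_ident)
next
  case False
  then show ?thesis by simp
qed

lemma m_identity:
  assumes "0 < \<alpha>" "\<alpha> < 1" "(D::real) > 0"
  shows "(2 / D powr (1/(1-\<alpha>))) powr (\<alpha>-1) * (2 / (D * 2 powr \<alpha>)) = 1"
proof -
  have "(2 / D powr (1/(1-\<alpha>))) powr (\<alpha>-1) = 2 powr (\<alpha>-1) / (D powr (1/(1-\<alpha>))) powr (\<alpha>-1)"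
    using assms by (simp add: powr_divide)
  also have "(D powr (1/(1-\<alpha>))) powr (\<alpha>-1) = D powr (-1)"
  proof -
    have "(1/(1-\<alpha>))*(\<alpha>-1) = -1" using assms by (simp add: field_simps)
    then show ?thesis by (simp add: powr_powr)
  qed
  also have "D powr (-1) = 1 / D" using assms by (simp add: powr_minus_divide)
  also have "2 powr (\<alpha>-1) = 2 powr \<alpha> / 2" by (simp add: powr_diff)
  finally show ?thesis using assms by (simp add: field_simps)
qed

lemma two_identity: "(2::real) powr (\<alpha>-1) * (2 / 2 powr \<alpha>) = 1"
  by (simp add: powr_diff)

lemma finite_eq:
  fixes E :: "'a set set" and \<alpha> :: real and \<Delta> :: nat
  assumes \<alpha>0: "0 < \<alpha>" and \<alpha>1: "\<alpha> < 1" and D: "\<Delta> \<ge> 1" and fin: "finite E"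
    and card2: "\<forall>e\<in>E. card e = 2"
    and deg: "\<forall>v. card (inc_edges E v) \<le> \<Delta>"
  defines "m \<equiv> 2 / real \<Delta> powr (1/(1-\<alpha>))"
  shows "\<exists>\<mu>. (\<forall>e. \<mu> e \<in> (if e\<in>E then {m..2} else {0})) \<and>
     (\<forall>e\<in>E. \<mu> e = (\<Sum>v\<in>e. \<mu> e powr \<alpha> / (\<Sum>e'\<in>inc_edges E v. \<mu> e' powr \<alpha>)))"
proof -
  have Dpos: "real \<Delta> > 0" using D by simp
  have "real \<Delta> powr (1/(1-\<alpha>)) \<ge> 1"
    using D \<alpha>1 by (intro ge_one_powr_ge_zero) auto
  then have m_pos: "0 < m" and m2: "m \<le> 2" unfolding m_def using D by (auto simp: field_simps)
  define I where "I e = (if e\<in>E then {m..2} else {0::real})" for e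
  define B where "B = {\<mu>. \<forall>e. \<mu> e \<in> I e}"
  define W where "W = \<Union>E"
  define S where "S \<mu> v = (\<Sum>e'\<in>inc_edges E v. \<mu> e' powr \<alpha>)" for \<mu> :: "'a set \<Rightarrow> real" and v
  define \<Phi> where "\<Phi> \<mu> = (\<Sum>v\<in>W. ln (S \<mu> v)) - \<alpha> * (\<Sum>e\<in>E. \<mu> e)" for \<mu>
  have fine: "finite e" if "e \<in> E" for e
    using card2 that by (metis card.infinite zero_neq_numeral)
  have finW: "finite W" unfolding W_def using fin fine by blast
  have finInc: "finite (inc_edges E v)" for v
    using fin unfolding inc_edges_def by simp
  have inc_iff: "e \<in> inc_edges E v \<longleftrightarrow> e \<in> E \<and> v \<in> e" for e v
    unfolding inc_edges_def by simp
  have Bmem: "\<mu> e \<in> {m..2}" if "\<mu> \<in> B" "e \<in> E" for \<mu> e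
    using that unfolding B_def I_def by (metis (mono_tags, lifting) mem_Collect_eq)
  have Bpos: "\<mu> e \<ge> m" "\<mu> e \<le> 2" if "\<mu> \<in> B" "e \<in> E" for \<mu> e
    using Bmem[OF that] by auto
  have S_ge: "\<mu> e powr \<alpha> \<le> S \<mu> v" if "\<mu> \<in> B" "e \<in> E" "v \<in> e" for \<mu> e v
    unfolding S_def
    by (rule member_le_sum) (use that finInc inc_iff in auto)
  have S_pos: "0 < S \<mu> v" if "\<mu> \<in> B" "e \<in> E" "v \<in> e" for \<mu> e v
  proof -
    have "0 < \<mu> e powr \<alpha>" using Bpos[OF that(1,2)] m_pos by simp
    then show ?thesis using S_ge[OF that] by linarith
  qed
  have S_posW: "0 < S \<mu> v" if "\<mu> \<in> B" "v \<in> W" for \<mu> v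
    using that S_pos unfolding W_def by blast
  have S_le: "S \<mu> v \<le> real \<Delta> * 2 powr \<alpha>" if "\<mu> \<in> B" for \<mu> v
  proof -
    have "S \<mu> v \<le> (\<Sum>e'\<in>inc_edges E v. 2 powr \<alpha>)"
      unfolding S_def
    proof (rule sum_mono)
      fix e' assume "e' \<in> inc_edges E v"
      then have "e' \<in> E" using inc_iff by auto
      then show "\<mu> e' powr \<alpha> \<le> 2 powr \<alpha>"
        using Bpos[OF that \<open>e' \<in> E\<close>] m_pos \<alpha>0 by (intro powr_mono2) auto
    qed
    also have "\<dots> = real (card (inc_edges E v)) * 2 powr \<alpha>" by simp
    also have "\<dots> \<le> real \<Delta> * 2 powr \<alpha>" using deg by (intro mult_right_mono) auto
    finally show ?thesis .
  qed
  have compB: "compact B" unfolding B_def by (rule box_compact) (simp add: I_def)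
  have B_ne: "(\<lambda>e. if e \<in> E then m else 0) \<in> B" unfolding B_def I_def using m2 by auto
  have contS: "continuous_on B (\<lambda>\<mu>. S \<mu> v)" for v
    unfolding S_def
  proof (intro continuous_on_sum continuous_on_powr cont_coord continuous_on_const ballI)
    fix \<mu> e' assume "\<mu> \<in> B" "e' \<in> inc_edges E v"
    then show "\<mu> e' \<noteq> 0" using Bpos[of \<mu> e'] m_pos inc_iff by force
  qed
  have contPhi: "continuous_on B \<Phi>"
  proof -
    have "continuous_on B (\<lambda>\<mu>. ln (S \<mu> v))" if "v \<in> W" for v
      by (rule continuous_on_ln[OF contS]) (use S_posW that in force)
    then have c1: "continuous_on B (\<lambda>\<mu>. \<Sum>v\<in>W. ln (S \<mu> v))"
      by (rule continuous_on_sum)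
    have c2: "continuous_on B (\<lambda>\<mu>. \<alpha> * (\<Sum>e\<in>E. \<mu> e))"
      by (intro continuous_on_mult continuous_on_const continuous_on_sum cont_coord)
    show ?thesis unfolding \<Phi>_def by (rule continuous_on_diff[OF c1 c2])
  qed
  obtain \<mu> where \<mu>B: "\<mu> \<in> B" and max: "\<And>\<nu>. \<nu> \<in> B \<Longrightarrow> \<Phi> \<nu> \<le> \<Phi> \<mu>"
    using continuous_attains_sup[OF compB _ contPhi] B_ne by blast
  have "\<mu> e = (\<Sum>v\<in>e. \<mu> e powr \<alpha> / (\<Sum>e'\<in>inc_edges E v. \<mu> e' powr \<alpha>))" if eE: "e \<in> E" for e
  proof -
    define t0 where "t0 = \<mu> e"
    have t0m: "m \<le> t0" and t02: "t0 \<le> 2" using Bpos[OF \<mu>B eE] t0_def by auto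
    have t0pos: "0 < t0" using t0m m_pos by simp
    have updB: "\<mu>(e:=s) \<in> B" if "m \<le> s" "s \<le> 2" for s
    proof -
      have "(\<mu>(e:=s)) e' \<in> I e'" for e'
      proof (cases "e' = e")
        case True then show ?thesis using that eE by (simp add: I_def)
      next
        case False then show ?thesis using \<mu>B by (simp add: B_def)
      qed
      then show ?thesis by (simp add: B_def)
    qed
    define g where "g s = \<Phi> (\<mu>(e:=s))" for s
    have g0: "g t0 = \<Phi> \<mu>" unfolding g_def t0_def by simp
    define R where "R = (\<Sum>v\<in>e. 1 / S \<mu> v)"
    define Dv where "Dv = \<alpha> * t0 powr (\<alpha>-1) * R - \<alpha>"
    have d2: "((\<lambda>s. S (\<mu>(e:=s)) v) has_real_derivative
        (\<Sum>e'\<in>inc_edges E v. if e' = e then \<alpha> * t0 powr (\<alpha>-1) else 0)) (at t0)" for v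
      unfolding S_def by (rule DERIV_sum) (rule deriv_upd[OF t0pos])
    have d3: "((\<lambda>s. ln (S (\<mu>(e:=s)) v)) has_real_derivative
        (1 / S \<mu> v) * (\<Sum>e'\<in>inc_edges E v. if e' = e then \<alpha> * t0 powr (\<alpha>-1) else 0)) (at t0)"
      if "v \<in> W" for v
    proof -
      have eq: "S (\<mu>(e:=t0)) v = S \<mu> v" unfolding t0_def by simp
      show ?thesis
        using DERIV_chain2[OF DERIV_ln_divide d2[of v]] eq S_posW[OF \<mu>B that] by simp
    qed
    have d4: "((\<lambda>s. \<Sum>e'\<in>E. (\<mu>(e:=s)) e') has_real_derivative (\<Sum>e'\<in>E. if e' = e then 1 else 0)) (at t0)"
      by (rule DERIV_sum) (rule deriv_upd_lin)
    have dg: "(g has_real_derivative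
        (\<Sum>v\<in>W. (1 / S \<mu> v) * (\<Sum>e'\<in>inc_edges E v. if e' = e then \<alpha> * t0 powr (\<alpha>-1) else 0))
         - \<alpha> * (\<Sum>e'\<in>E. if e' = e then 1 else 0)) (at t0)"
      unfolding g_def \<Phi>_def
      by (intro DERIV_diff DERIV_sum d3 DERIV_cmult d4)
    have v1: "(\<Sum>e'\<in>E. if e' = e then 1 else 0) = (1::real)"
      using fin eE by (simp add: sum.delta)
    have v2: "(\<Sum>v\<in>W. (1 / S \<mu> v) * (\<Sum>e'\<in>inc_edges E v. if e' = e then \<alpha> * t0 powr (\<alpha>-1) else 0))
        = \<alpha> * t0 powr (\<alpha>-1) * R"
    proof -
      have "(\<Sum>v\<in>W. (1 / S \<mu> v) * (\<Sum>e'\<in>inc_edges E v. if e' = e then \<alpha> * t0 powr (\<alpha>-1) else 0))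
          = (\<Sum>v\<in>W. if v \<in> e then \<alpha> * t0 powr (\<alpha>-1) * (1 / S \<mu> v) else 0)"
        by (intro sum.cong refl) (simp add: sum.delta finInc inc_iff eE)
      also have "\<dots> = (\<Sum>v\<in>W \<inter> e. \<alpha> * t0 powr (\<alpha>-1) * (1 / S \<mu> v))"
        by (rule sum.inter_restrict[OF finW, symmetric])
      also have "W \<inter> e = e" unfolding W_def using eE by blast
      finally show ?thesis unfolding R_def by (simp add: sum_distrib_left)
    qed
    have dg': "(g has_real_derivative Dv) (at t0)"
      using dg unfolding v1 v2 Dv_def by simp
    have R_up: "R \<le> 2 * (1 / t0 powr \<alpha>)"
    proof -
      have "R \<le> (\<Sum>v\<in>e. 1 / t0 powr \<alpha>)"
        unfolding R_def
      proof (rule sum_mono)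
        fix v assume "v \<in> e"
        then have "t0 powr \<alpha> \<le> S \<mu> v" using S_ge[OF \<mu>B eE] t0_def by simp
        then show "1 / S \<mu> v \<le> 1 / t0 powr \<alpha>"
        proof -
          have p: "0 < t0 powr \<alpha>" using t0pos by simp
          then have "0 < S \<mu> v * t0 powr \<alpha>"
            using \<open>t0 powr \<alpha> \<le> S \<mu> v\<close> by (intro mult_pos_pos) linarith+
          then show ?thesis using \<open>t0 powr \<alpha> \<le> S \<mu> v\<close> by (intro divide_left_mono) auto
        qed
      qed
      also have "\<dots> = 2 * (1 / t0 powr \<alpha>)" using card2 eE by simp
      finally show ?thesis .
    qed
    have R_low: "2 * (1 / (real \<Delta> * 2 powr \<alpha>)) \<le> R"
    proof -
      have "(\<Sum>v\<in>e. 1 / (real \<Delta> * 2 powr \<alpha>)) \<le> R"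
        unfolding R_def
      proof (rule sum_mono)
        fix v assume "v \<in> e"
        then have "0 < S \<mu> v" using S_pos[OF \<mu>B eE] by simp
        then show "1 / (real \<Delta> * 2 powr \<alpha>) \<le> 1 / S \<mu> v"
          using S_le[OF \<mu>B, of v] by (intro divide_left_mono) auto
      qed
      moreover have "(\<Sum>v\<in>e. 1 / (real \<Delta> * 2 powr \<alpha>)) = 2 * (1 / (real \<Delta> * 2 powr \<alpha>))"
        using card2 eE by simp
      ultimately show ?thesis by linarith
    qed
    have not_pos: "\<not> Dv > 0"
    proof
      assume Dp: "Dv > 0"
      have "t0 \<noteq> 2"
      proof
        assume t2: "t0 = 2"
        have "t0 powr (\<alpha>-1) * R \<le> 2 powr (\<alpha>-1) * (2 * (1 / 2 powr \<alpha>))"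
          using mult_left_mono[OF R_up, of "t0 powr (\<alpha>-1)"] t2 by simp
        also have "\<dots> = 1" using two_identity[of \<alpha>] by (simp add: field_simps)
        finally have c: "t0 powr (\<alpha>-1) * R \<le> 1" .
        have "\<alpha> * (t0 powr (\<alpha>-1) * R) \<le> \<alpha> * 1" by (rule mult_left_mono[OF c]) (use \<alpha>0 in simp)
        then show False using Dp unfolding Dv_def by (simp add: algebra_simps)
      qed
      then have t2: "t0 < 2" using t02 by simp
      obtain d where d: "d > 0" "\<And>h. h > 0 \<Longrightarrow> h < d \<Longrightarrow> g t0 < g (t0 + h)"
        using DERIV_pos_inc_right[OF dg' Dp] by blast
      define h where "h = min (d/2) ((2 - t0)/2)"
      have "h > 0" "h < d" using d t2 unfolding h_def by auto
      have hle: "h \<le> (2 - t0)/2" unfolding h_def by (rule min.cobounded2)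
      have "g t0 < g (t0 + h)" using d(2)[OF \<open>h > 0\<close> \<open>h < d\<close>] .
      moreover have "g (t0 + h) \<le> g t0"
        unfolding g0 unfolding g_def
        using \<open>h > 0\<close> t0m t2 hle by (intro max updB) auto
      ultimately show False by simp
    qed
    have not_neg: "\<not> Dv < 0"
    proof
      assume Dn: "Dv < 0"
      have "t0 \<noteq> m"
      proof
        assume tm: "t0 = m"
        have "1 = t0 powr (\<alpha>-1) * (2 / (real \<Delta> * 2 powr \<alpha>))"
          using m_identity[OF \<alpha>0 \<alpha>1 Dpos] tm unfolding m_def by simp
        also have "\<dots> \<le> t0 powr (\<alpha>-1) * R"
          using mult_left_mono[OF R_low, of "t0 powr (\<alpha>-1)"] by simp
        finally have c: "1 \<le> t0 powr (\<alpha>-1) * R" .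
        have "\<alpha> * 1 \<le> \<alpha> * (t0 powr (\<alpha>-1) * R)" by (rule mult_left_mono[OF c]) (use \<alpha>0 in simp)
        then show False using Dn unfolding Dv_def by (simp add: algebra_simps)
      qed
      then have tm: "m < t0" using t0m by simp
      obtain d where d: "d > 0" "\<And>h. h > 0 \<Longrightarrow> h < d \<Longrightarrow> g t0 < g (t0 - h)"
        using DERIV_neg_dec_left[OF dg' Dn] by blast
      define h where "h = min (d/2) ((t0 - m)/2)"
      have "h > 0" "h < d" using d tm unfolding h_def by auto
      have hle: "h \<le> (t0 - m)/2" unfolding h_def by (rule min.cobounded2)
      have "g t0 < g (t0 - h)" using d(2)[OF \<open>h > 0\<close> \<open>h < d\<close>] .
      moreover have "g (t0 - h) \<le> g t0"
        unfolding g0 unfolding g_def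
        using \<open>h > 0\<close> tm t02 hle by (intro max updB) auto
      ultimately show False by simp
    qed
    have "Dv = 0" using not_pos not_neg by simp
    then have key: "t0 powr (\<alpha>-1) * R = 1" using \<alpha>0 unfolding Dv_def
      by (simp add: algebra_simps)
    have "t0 powr \<alpha> = t0 powr (\<alpha>-1) * t0"
      using t0pos by (simp add: powr_diff)
    then have "t0 powr \<alpha> * R = t0" using key by (simp add: algebra_simps)
    moreover have "(\<Sum>v\<in>e. \<mu> e powr \<alpha> / (\<Sum>e'\<in>inc_edges E v. \<mu> e' powr \<alpha>)) = t0 powr \<alpha> * R"
      unfolding R_def t0_def S_def by (simp add: sum_distrib_left)
    ultimately show ?thesis using t0_def by simp
  qed
  moreover have "\<forall>e. \<mu> e \<in> (if e\<in>E then {m..2} else {0})"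
    using \<mu>B unfolding B_def I_def by simp
  ultimately show ?thesis by blast
qed


theorem mainTheorem2:
  fixes V :: "'a set" and E :: "'a set set" and \<alpha> :: real and \<Delta> :: nat
  assumes "0 \<le> \<alpha>" and "\<alpha> < 1"
    and "countable V"
    and "is_graph V E"
    and "degree_bounded V E \<Delta>"
  shows "\<exists>\<mu>. equilibrium \<alpha> E \<mu> \<and> non_vanishing E \<mu> \<and>
           (\<forall>e\<in>E. \<mu> e \<ge> 2 / (real \<Delta> powr (1 / (1 - \<alpha>))))"
proof (cases "E = {}")
  case True
  then show ?thesis unfolding equilibrium_def non_vanishing_def by auto
next
  case Ene: False
  have eV: "e \<subseteq> V" and card2: "card e = 2" if "e \<in> E" for e
    using assms(4) that unfolding is_graph_def by auto
  have fine: "finite e" if "e \<in> E" for e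
    using card2[OF that] by (metis card.infinite zero_neq_numeral)
  have inc_iff: "e \<in> inc_edges E v \<longleftrightarrow> e \<in> E \<and> v \<in> e" for e v
    unfolding inc_edges_def by simp
  have finInc: "finite (inc_edges E v)" and degv: "card (inc_edges E v) \<le> \<Delta>" if "v \<in> V" for v
    using assms(5) that unfolding degree_bounded_def by auto
  have inc_out: "inc_edges E v = {}" if "v \<notin> V" for v
    using eV that unfolding inc_edges_def by blast
  have finInc': "finite (inc_edges E v)" for v
    using finInc inc_out by (cases "v \<in> V") auto
  have cardInc: "1 \<le> card (inc_edges E v)" if "e \<in> E" "v \<in> e" for e v
  proof -
    have "e \<in> inc_edges E v" using that inc_iff by simp
    then have "inc_edges E v \<noteq> {}" by blast
    then show ?thesis using finInc' by (simp add: Suc_le_eq card_gt_0_iff)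
  qed
  obtain e0 v0 where e0: "e0 \<in> E" and v0: "v0 \<in> e0"
    using Ene card2 by (metis all_not_in_conv card.empty zero_neq_numeral)
  have D: "\<Delta> \<ge> 1" using cardInc[OF e0 v0] degv[of v0] eV[OF e0] v0 by auto
  have Dpos: "real \<Delta> > 0" using D by simp
  show ?thesis
  proof (cases "\<alpha> = 0")
    case True
    define \<mu> where "\<mu> e = (\<Sum>v\<in>e. 1 / real (card (inc_edges E v)))" for e
    have low: "2 / real \<Delta> \<le> \<mu> e" if "e \<in> E" for e
    proof -
      have "(\<Sum>v\<in>e. 1 / real \<Delta>) \<le> \<mu> e"
        unfolding \<mu>_def
      proof (rule sum_mono)
        fix v assume "v \<in> e"
        then have "1 \<le> card (inc_edges E v)" "card (inc_edges E v) \<le> \<Delta>"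
          using cardInc[OF that] degv eV[OF that] by auto
        then show "1 / real \<Delta> \<le> 1 / real (card (inc_edges E v))"
          by (intro divide_left_mono) auto
      qed
      then show ?thesis using card2[OF that] by simp
    qed
    have pos: "0 < \<mu> e" if "e \<in> E" for e
      using low[OF that] Dpos by (smt (verit) divide_pos_pos)
    have eq: "\<mu> e = (\<Sum>v\<in>e. \<mu> e powr \<alpha> / (\<Sum>e'\<in>inc_edges E v. \<mu> e' powr \<alpha>))" if "e \<in> E" for e
    proof -
      have "(\<Sum>e'\<in>inc_edges E v. \<mu> e' powr \<alpha>) = real (card (inc_edges E v))" for v
      proof -
        have "(\<Sum>e'\<in>inc_edges E v. \<mu> e' powr \<alpha>) = (\<Sum>e'\<in>inc_edges E v. 1)"
        proof (intro sum.cong refl)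
          fix e' assume "e' \<in> inc_edges E v"
          then have "e' \<in> E" using inc_iff by simp
          then have "\<mu> e' > 0" by (rule pos)
          then show "\<mu> e' powr \<alpha> = 1" using True by simp
        qed
        then show ?thesis by simp
      qed
      moreover have "\<mu> e powr \<alpha> = 1" using pos[OF that] True by (simp add: powr_def)
      ultimately show ?thesis unfolding \<mu>_def by simp
    qed
    have "real \<Delta> powr (1 / (1 - \<alpha>)) = real \<Delta>" using True Dpos by simp
    then show ?thesis
      unfolding equilibrium_def non_vanishing_def
      using low pos eq by (auto intro: less_imp_le)
  next
    case False
    then have \<alpha>0: "0 < \<alpha>" using assms(1) by simp
    define m where "m = 2 / real \<Delta> powr (1/(1-\<alpha>))"
    have "real \<Delta> powr (1/(1-\<alpha>)) \<ge> 1"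
      using D assms(2) by (intro ge_one_powr_ge_zero) auto
    then have m_pos: "0 < m" and m2: "m \<le> 2" unfolding m_def using D by (auto simp: field_simps)
    define I where "I e = (if e\<in>E then {m..2} else {0::real})" for e
    define B where "B = {\<mu>. \<forall>e. \<mu> e \<in> I e}"
    define RHS where "RHS \<mu> e = (\<Sum>v\<in>e. \<mu> e powr \<alpha> / (\<Sum>e'\<in>inc_edges E v. \<mu> e' powr \<alpha>))"
      for \<mu> :: "'a set \<Rightarrow> real" and e
    define T where "T e = {\<mu>\<in>B. \<mu> e = RHS \<mu> e}" for e
    have Bmem: "\<mu> e \<in> {m..2}" if "\<mu> \<in> B" "e \<in> E" for \<mu> e
      using that unfolding B_def I_def by (metis (mono_tags, lifting) mem_Collect_eq)
    have compB: "compact B" unfolding B_def by (rule box_compact) (simp add: I_def)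
    have closB: "closed B" unfolding B_def by (rule box_closed) (simp add: I_def)
    have closT: "closed (T e)" if eE: "e \<in> E" for e
    proof -
      have den_pos: "0 < (\<Sum>e'\<in>inc_edges E v. \<mu> e' powr \<alpha>)" if "\<mu> \<in> B" "v \<in> e" for \<mu> v
      proof -
        have "\<mu> e powr \<alpha> \<le> (\<Sum>e'\<in>inc_edges E v. \<mu> e' powr \<alpha>)"
          by (rule member_le_sum) (use that eE finInc' inc_iff in auto)
        moreover have "0 < \<mu> e powr \<alpha>" using Bmem[OF that(1) eE] m_pos by simp
        ultimately show ?thesis by linarith
      qed
      have cden: "continuous_on B (\<lambda>\<mu>. \<Sum>e'\<in>inc_edges E v. \<mu> e' powr \<alpha>)" for v
      proof (intro continuous_on_sum continuous_on_powr cont_coord continuous_on_const ballI)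
        fix \<mu> e' assume "\<mu> \<in> B" "e' \<in> inc_edges E v"
        then show "\<mu> e' \<noteq> 0" using Bmem[of \<mu> e'] m_pos inc_iff by force
      qed
      have cnum: "continuous_on B (\<lambda>\<mu>. \<mu> e powr \<alpha>)"
        by (intro continuous_on_powr cont_coord continuous_on_const ballI)
           (use Bmem eE m_pos in force)
      have "continuous_on B (\<lambda>\<mu>. \<mu> e powr \<alpha> / (\<Sum>e'\<in>inc_edges E v. \<mu> e' powr \<alpha>))" if "v \<in> e" for v
        by (rule continuous_on_divide[OF cnum cden]) (use den_pos that in force)
      then have cR: "continuous_on B (\<lambda>\<mu>. RHS \<mu> e)"
        unfolding RHS_def by (rule continuous_on_sum)
      have cf: "continuous_on B (\<lambda>\<mu>. \<mu> e - RHS \<mu> e)"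
        by (rule continuous_on_diff[OF cont_coord cR])
      have "T e = B \<inter> (\<lambda>\<mu>. \<mu> e - RHS \<mu> e) -` {0}" unfolding T_def by auto
      then show ?thesis using continuous_closed_preimage[OF cf closB closed_singleton] by simp
    qed
    have fip: "B \<inter> (\<Inter>e\<in>F. T e) \<noteq> {}" if F: "finite F" "F \<subseteq> E" for F
    proof -
      define E' where "E' = (\<Union>v\<in>\<Union>F. inc_edges E v)"
      have finUF: "finite (\<Union>F)" using F fine by blast
      have finE': "finite E'" unfolding E'_def using finUF finInc' by blast
      have E'E: "E' \<subseteq> E" unfolding E'_def inc_edges_def by blast
      have FE': "F \<subseteq> E'"
      proof
        fix e assume "e \<in> F"
        then have eE: "e \<in> E" using F by blast
        then obtain v where "v \<in> e" using card2 by (metis all_not_in_conv card.empty zero_neq_numeral)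
        then show "e \<in> E'" unfolding E'_def using \<open>e \<in> F\<close> eE inc_iff by blast
      qed
      have incE': "inc_edges E' v = inc_edges E v" if "v \<in> \<Union>F" for v
        unfolding E'_def inc_edges_def using that by blast
      have degE': "\<forall>v. card (inc_edges E' v) \<le> \<Delta>"
      proof
        fix v
        show "card (inc_edges E' v) \<le> \<Delta>"
        proof (cases "v \<in> V")
          case True
          have "inc_edges E' v \<subseteq> inc_edges E v" using E'E unfolding inc_edges_def by blast
          then have "card (inc_edges E' v) \<le> card (inc_edges E v)"
            using finInc'[of v] by (rule card_mono[rotated])
          then show ?thesis using degv[OF True] by simp
        next
          case False
          have "inc_edges E' v \<subseteq> inc_edges E v" using E'E unfolding inc_edges_def by blast
          then have "inc_edges E' v = {}" using inc_out[OF False] by blast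
          then show ?thesis by simp
        qed
      qed
      obtain \<mu>' where \<mu>'B: "\<forall>e. \<mu>' e \<in> (if e\<in>E' then {m..2} else {0})"
        and \<mu>'eq: "\<forall>e\<in>E'. \<mu>' e = (\<Sum>v\<in>e. \<mu>' e powr \<alpha> / (\<Sum>e'\<in>inc_edges E' v. \<mu>' e' powr \<alpha>))"
        using finite_eq[OF \<alpha>0 assms(2) D finE', of] card2 E'E degE' unfolding m_def by blast
      define \<mu> where "\<mu> e = (if e \<in> E' then \<mu>' e else if e \<in> E then m else 0)" for e
      have "\<mu> e \<in> I e" for e
        using \<mu>'B[rule_format, of e] E'E m2 unfolding \<mu>_def I_def by auto
      then have "\<mu> \<in> B" unfolding B_def by blast
      moreover have "\<mu> \<in> T e" if "e \<in> F" for e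
      proof -
        have eE': "e \<in> E'" using FE' that by blast
        have "RHS \<mu> e = (\<Sum>v\<in>e. \<mu>' e powr \<alpha> / (\<Sum>e'\<in>inc_edges E' v. \<mu>' e' powr \<alpha>))"
          unfolding RHS_def
        proof (intro sum.cong refl)
          fix v assume "v \<in> e"
          then have vF: "v \<in> \<Union>F" using that by blast
          have "(\<Sum>e'\<in>inc_edges E v. \<mu> e' powr \<alpha>) = (\<Sum>e'\<in>inc_edges E' v. \<mu>' e' powr \<alpha>)"
            unfolding incE'[OF vF, symmetric]
            by (intro sum.cong refl) (simp add: \<mu>_def inc_edges_def)
          then show "\<mu> e powr \<alpha> / (\<Sum>e'\<in>inc_edges E v. \<mu> e' powr \<alpha>) =
              \<mu>' e powr \<alpha> / (\<Sum>e'\<in>inc_edges E' v. \<mu>' e' powr \<alpha>)"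
            using eE' by (simp add: \<mu>_def)
        qed
        then have "\<mu> e = RHS \<mu> e" using \<mu>'eq eE' by (simp add: \<mu>_def)
        then show ?thesis unfolding T_def using \<open>\<mu> \<in> B\<close> by blast
      qed
      ultimately show ?thesis by blast
    qed
    have "B \<inter> (\<Inter>e\<in>E. T e) \<noteq> {}"
      by (rule compact_imp_fip_image[OF compB closT fip])
    then obtain \<mu> where \<mu>B: "\<mu> \<in> B" and \<mu>T: "\<And>e. e \<in> E \<Longrightarrow> \<mu> \<in> T e" by blast
    have pos: "m \<le> \<mu> e" if "e \<in> E" for e using Bmem[OF \<mu>B that] by simp
    have eqs: "\<mu> e = RHS \<mu> e" if "e \<in> E" for e using \<mu>T[OF that] unfolding T_def by blast
    have p: "0 < \<mu> e" if "e \<in> E" for e using pos[OF that] m_pos by linarith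
    show ?thesis
      unfolding equilibrium_def non_vanishing_def
      using p pos eqs unfolding RHS_def m_def
      by (intro exI[of _ \<mu>]) (auto intro: less_imp_le)
  qed
qed

end
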